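(* Let $n\ge 1$, let $\rho>0$ and let $d_1,\dots,d_n>0$. Let $W=(w_{ij})$ be the $n\times n$ matrix with $w_{ij}=1/d_{\min(i,j)}$, let $\mathbf 1\in\mathbb R^n$ be the column vector of ones, and set $M=W-\frac{1}{\rho}\mathbf 1\mathbf 1^T$. If $d_1\le d_2\le\cdots\le d_n$ and $d_1>\rho$, then $M$ is negative semidefinite.
   Context: Interpretation: $d_i$ is the density of the cargo placed in the $i$-th position from the bottom of a vessel and $\rho$ is the water density; the hypothesis says every cargo lies above cargoes of lower (or equal) density and the lowest cargo is heavier than water. *)

theory Defs
  imports Main "HOL.Real"
begin

text \<open>An n x n real matrix is represented as a function A :: nat => nat => real,
  indexed by i, j in {1..n}.\<close>

definition neg_semidef :: "nat \<Rightarrow> (nat \<Rightarrow> nat \<Rightarrow> real) \<Rightarrow> bool" where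
  "neg_semidef n A \<longleftrightarrow>
     (\<forall>i\<in>{1..n}. \<forall>j\<in>{1..n}. A i j = A j i) \<and>
     (\<forall>x :: nat \<Rightarrow> real. (\<Sum>i=1..n. \<Sum>j=1..n. x i * A i j * x j) \<le> 0)"

definition W_mat :: "(nat \<Rightarrow> real) \<Rightarrow> nat \<Rightarrow> nat \<Rightarrow> real" where
  "W_mat d i j = 1 / d (min i j)"

text \<open>M = W - (1/rho) 1 1^T; the matrix 1 1^T has all entries equal to 1.\<close>
definition M_mat :: "(nat \<Rightarrow> real) \<Rightarrow> real \<Rightarrow> nat \<Rightarrow> nat \<Rightarrow> real" where
  "M_mat d \<rho> i j = W_mat d i j - (1 / \<rho>) * 1 * 1"

end

theory Submission
  imports Defs
begin
lemma gen:
  fixes a x :: "nat \<Rightarrow> real"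
  shows "\<forall>i j. m \<le> i \<longrightarrow> i \<le> j \<longrightarrow> j \<le> n \<longrightarrow> a j \<le> a i \<Longrightarrow> a m \<le> c \<Longrightarrow>
     (\<Sum>i=m..n. \<Sum>j=m..n. x i * (a (min i j) - c) * x j) \<le> 0"
proof (induction "n - m" arbitrary: m c)
  case 0
  show ?case
  proof (cases "m \<le> n")
    case True
    with 0 have "n = m" by simp
    have "(a m - c) * (x m)^2 \<le> 0" using 0 by (simp add: mult_nonpos_nonneg)
    then show ?thesis using \<open>n = m\<close> by (simp add: power2_eq_square mult_ac)
  next
    case False then show ?thesis by simp
  qed
next
  case (Suc k)
  then have mn: "m \<le> n" "k = n - Suc m" by auto
  have S: "{m..n} = insert m {Suc m..n}" using mn by auto
  define T where "T = (\<Sum>j=Suc m..n. x j)"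
  define R where "R = (\<Sum>i=Suc m..n. \<Sum>j=Suc m..n. x i * (a (min i j) - a m) * x j)"
  have R: "R \<le> 0"
  proof (cases "Suc m \<le> n")
    case True
    show ?thesis unfolding R_def
      apply (rule Suc.hyps(1)[OF mn(2)])
      using Suc.prems(1) True by auto
  next
    case False then show ?thesis unfolding R_def by simp
  qed
  have mi: "min m j = m" if "j \<in> {Suc m..n}" for j using that by auto
  have mi2: "min j m = m" if "j \<in> {Suc m..n}" for j using that by auto
  have inner: "(\<Sum>i=Suc m..n. \<Sum>j=Suc m..n. x i * (a (min i j) - c) * x j)
     = R + (a m - c) * T^2"
  proof -
    have "(\<Sum>i=Suc m..n. \<Sum>j=Suc m..n. x i * (a (min i j) - c) * x j)
       = (\<Sum>i=Suc m..n. \<Sum>j=Suc m..n. x i * (a (min i j) - a m) * x j + (a m - c) * (x i * x j))"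
      by (intro sum.cong refl) (simp add: algebra_simps)
    also have "\<dots> = R + (\<Sum>i=Suc m..n. \<Sum>j=Suc m..n. (a m - c) * (x i * x j))"
      by (simp add: R_def sum.distrib)
    also have "(\<Sum>i=Suc m..n. \<Sum>j=Suc m..n. (a m - c) * (x i * x j)) = (a m - c) * T^2"
      by (simp add: T_def sum_distrib_left[symmetric] sum_product power2_eq_square)
    finally show ?thesis .
  qed
  have row: "(\<Sum>j=Suc m..n. x m * (a (min m j) - c) * x j) = x m * (a m - c) * T"
  proof -
    have "(\<Sum>j=Suc m..n. x m * (a (min m j) - c) * x j) = (\<Sum>j=Suc m..n. x m * (a m - c) * x j)"
      by (rule sum.cong) (auto simp: mi)
    then show ?thesis unfolding T_def by (simp add: sum_distrib_left)
  qed
  have col: "(\<Sum>i=Suc m..n. x i * (a (min i m) - c) * x m) = x m * (a m - c) * T"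
  proof -
    have "(\<Sum>i=Suc m..n. x i * (a (min i m) - c) * x m) = (\<Sum>j=Suc m..n. x m * (a m - c) * x j)"
      by (rule sum.cong) (auto simp: mi2)
    then show ?thesis unfolding T_def by (simp add: sum_distrib_left)
  qed
  have "(\<Sum>i=m..n. \<Sum>j=m..n. x i * (a (min i j) - c) * x j)
     = x m * (a m - c) * x m + x m * (a m - c) * T + (x m * (a m - c) * T + R + (a m - c) * T^2)"
  proof -
    have fin: "finite {Suc m..n}" "m \<notin> {Suc m..n}" by auto
    have "(\<Sum>i=m..n. \<Sum>j=m..n. x i * (a (min i j) - c) * x j)
      = x m * (a (min m m) - c) * x m + (\<Sum>j=Suc m..n. x m * (a (min m j) - c) * x j)
        + ((\<Sum>i=Suc m..n. x i * (a (min i m) - c) * x m) + (\<Sum>i=Suc m..n. \<Sum>j=Suc m..n. x i * (a (min i j) - c) * x j))"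
      unfolding S by (simp only: sum.insert[OF fin] sum.distrib)
    then show ?thesis by (simp only: row col inner min.idem)
  qed
  also have "\<dots> = (a m - c) * (x m + T)^2 + R" by (simp add: algebra_simps power2_eq_square)
  also have "\<dots> \<le> 0"
  proof -
    have "(a m - c) * (x m + T)^2 \<le> 0" using Suc.prems(2) by (intro mult_nonpos_nonneg) auto
    then show ?thesis using R by linarith
  qed
  finally show ?case .
qed

theorem mainTheorem4:
  fixes n :: nat and \<rho> :: real and d :: "nat \<Rightarrow> real"
  assumes "n \<ge> 1"
    and "\<rho> > 0"
    and "\<forall>i\<in>{1..n}. d i > 0"
    and "\<forall>i\<in>{1..n}. \<forall>j\<in>{1..n}. i \<le> j \<longrightarrow> d i \<le> d j"
    and "d 1 > \<rho>"
  shows "neg_semidef n (M_mat d \<rho>)"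
proof -
  define a where "a = (\<lambda>i. 1 / d i)"
  have dec: "\<forall>i j. 1 \<le> i \<longrightarrow> i \<le> j \<longrightarrow> j \<le> n \<longrightarrow> a j \<le> a i"
  proof (intro allI impI)
    fix i j :: nat assume h: "1 \<le> i" "i \<le> j" "j \<le> n"
    then have "0 < d i" "d i \<le> d j" using assms(3,4) by auto
    then show "a j \<le> a i" unfolding a_def by (simp add: frac_le)
  qed
  have a1: "a 1 \<le> 1 / \<rho>" unfolding a_def using assms(2,5) by (simp add: frac_le)
  show ?thesis unfolding neg_semidef_def
  proof (intro conjI allI ballI)
    fix i j assume "i \<in> {1..n}" "j \<in> {1..n}"
    show "M_mat d \<rho> i j = M_mat d \<rho> j i" by (simp add: M_mat_def W_mat_def min.commute)
  next
    fix x :: "nat \<Rightarrow> real"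
    have "(\<Sum>i=1..n. \<Sum>j=1..n. x i * M_mat d \<rho> i j * x j)
        = (\<Sum>i=1..n. \<Sum>j=1..n. x i * (a (min i j) - 1 / \<rho>) * x j)"
      by (simp add: M_mat_def W_mat_def a_def)
    also have "\<dots> \<le> 0" by (rule gen[OF dec a1])
    finally show "(\<Sum>i=1..n. \<Sum>j=1..n. x i * M_mat d \<rho> i j * x j) \<le> 0" .
  qed
qed

end
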